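(* ODH is population monotonic. Fix a strict priority order on $\mathcal C$ used to break all ties in ODH. Let $\sigma=\langle\mathcal V,\mathcal C,S,B\rangle$ be an approval-based multi-winner election and let $\emptyset\neq\mathcal G\subseteq\mathrm{ODH}(\sigma)$. 1. Let $\mathcal A\subseteq\mathcal C$ satisfy $\mathcal G\cap\mathcal A=\emptyset$ and $B(\mathcal A)\ge1$. Let $\sigma_1=\langle\mathcal V_1,\mathcal C,S,B_1\rangle$ be given by: $|\mathcal V_1|=|\mathcal V|$, $B_1(\mathcal A)=B(\mathcal A)-1$, $B_1(\mathcal A\cup\mathcal G)=B(\mathcal A\cup\mathcal G)+1$, and $B_1(\mathcal X)=B(\mathcal X)$ for all other $\mathcal X\subseteq\mathcal C$. Then $\mathcal G\cap\mathrm{ODH}(\sigma_1)\neq\emptyset$. 2. Let $\sigma_2=\langle\mathcal V_2,\mathcal C,S,B_2\rangle$ be given by: $|\mathcal V_2|=|\mathcal V|+1$, $B_2(\mathcal G)=B(\mathcal G)+1$, and $B_2(\mathcal X)=B(\mathcal X)$ for all $\mathcal X\neq\mathcal G$. Then $\mathcal G\cap\mathrm{ODH}(\sigma_2)\neq\emptyset$.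
   Context: An approval-based multi-winner election is a tuple $\sigma=\langle \mathcal V,\mathcal C,S,B\rangle$, where $\mathcal V$ is a finite set of agents, $\mathcal C$ is a finite set of candidates, $1\le S\le|\mathcal C|$ is an integer, and $B:2^{\mathcal C}\to\mathbb N$ gives, for each $\mathcal A\subseteq\mathcal C$, the number $B(\mathcal A)$ of agents whose ballot is exactly $\mathcal A$ (with $\sum_{\mathcal A}B(\mathcal A)\le|\mathcal V|$). For a non-empty $\mathcal A\subseteq\mathcal C$, the family $\mathfrak F_{\sigma,\mathcal A}$ is the set of all $F:2^{\mathcal C}\times\mathcal A\to\mathbb R$ such that: - $F(y,c)\ge0$ for all $y$ and $c$; - $F(y,c)=0$ if $c\notin y$; - $\sum_{c\in\mathcal A\cap y}F(y,c)=B(y)$ whenever $y\cap\mathcal A\neq\emptyset$. We write $\mathrm{Supp}_F(c)=\sum_yF(y,c)$ and $\mathrm{maxMin}(\sigma,\mathcal A)=\sup_{F\in\mathfrak F_{\sigma,\mathcal A}}\min_{c\in\mathcal A}\mathrm{Supp}_F(c)$. We also write $\mathfrak F^{\mathrm{opt}}_{\sigma,\mathcal A}=\{F\in\mathfrak F_{\sigma,\mathcal A}:\mathrm{Supp}_F(c)\ge\mathrm{maxMin}(\sigma,\mathcal A)\ \forall c\in\mathcal A\}$. The Open D'Hondt (ODH) rule proceeds as follows. Start with $\mathcal C_e=\emptyset$ and repeat $S$ times: - for each $c\in\mathcal C\setminus\mathcal C_e$, choose any $F\in\mathfrak F^{\mathrm{opt}}_{\sigma,\mathcal C_e\cup\{c\}}$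 and set $s_c=\mathrm{Supp}_F(c)$ (this value equals $\mathrm{maxMin}(\sigma,\mathcal C_e\cup\{c\})$); - then add to $\mathcal C_e$ a candidate $w\in\mathcal C\setminus\mathcal C_e$ with maximal $s_w$, breaking ties by the fixed priority order. The output $\mathcal C_e$ is denoted $\mathrm{ODH}(\sigma)$. *)

theory Defs
  imports Complex_Main
begin

text \<open>An election: number of agents nV, candidate set C (finite), committee size S,
  ballot counts B :: 'c set => nat (B y = number of agents whose ballot is exactly y).\<close>

definition valid_election :: "nat \<Rightarrow> 'c set \<Rightarrow> nat \<Rightarrow> ('c set \<Rightarrow> nat) \<Rightarrow> bool" where
  "valid_election nV C S B \<longleftrightarrow>
     finite C \<and> 1 \<le> S \<and> S \<le> card C \<and>
     (\<forall>y. \<not> y \<subseteq> C \<longrightarrow> B y = 0) \<and> (\<Sum>y\<in>Pow C. B y) \<le> nV"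

definition supp :: "'c set \<Rightarrow> ('c set \<Rightarrow> 'c \<Rightarrow> real) \<Rightarrow> 'c \<Rightarrow> real" where
  "supp C F c = (\<Sum>y\<in>Pow C. F y c)"

text \<open>The family F_{sigma,A}: only the values on 2^C x A matter.\<close>
definition flows :: "'c set \<Rightarrow> ('c set \<Rightarrow> nat) \<Rightarrow> 'c set \<Rightarrow> ('c set \<Rightarrow> 'c \<Rightarrow> real) set" where
  "flows C B A = {F. (\<forall>y\<in>Pow C. \<forall>c\<in>A. F y c \<ge> 0 \<and> (c \<notin> y \<longrightarrow> F y c = 0)) \<and>
                     (\<forall>y\<in>Pow C. y \<inter> A \<noteq> {} \<longrightarrow> (\<Sum>c\<in>A \<inter> y. F y c) = real (B y))}"

definition maxMin :: "'c set \<Rightarrow> ('c set \<Rightarrow> nat) \<Rightarrow> 'c set \<Rightarrow> real" where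
  "maxMin C B A = Sup ((\<lambda>F. Min (supp C F ` A)) ` flows C B A)"

definition odh_next :: "'c list \<Rightarrow> 'c set \<Rightarrow> ('c set \<Rightarrow> nat) \<Rightarrow> 'c set \<Rightarrow> 'c" where
  "odh_next prio C B Ce =
     (let R = C - Ce;
          m = Max ((\<lambda>c. maxMin C B (Ce \<union> {c})) ` R)
      in hd (filter (\<lambda>c. c \<in> R \<and> maxMin C B (Ce \<union> {c}) = m) prio))"

primrec odh_iter :: "'c list \<Rightarrow> 'c set \<Rightarrow> ('c set \<Rightarrow> nat) \<Rightarrow> nat \<Rightarrow> 'c set" where
  "odh_iter prio C B 0 = {}"
| "odh_iter prio C B (Suc k) =
     (let Ce = odh_iter prio C B k in Ce \<union> {odh_next prio C B Ce})"

definition ODH :: "'c list \<Rightarrow> 'c set \<Rightarrow> nat \<Rightarrow> ('c set \<Rightarrow> nat) \<Rightarrow> 'c set" where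
  "ODH prio C S B = odh_iter prio C B S"

end

theory Submission
  imports Defs
begin


lemma flows_nonempty:
  assumes "finite X" shows "flows C B X \<noteq> {}"
proof -
  define F where "F = (\<lambda>y c. if c \<in> y then real (B y) / real (card (X \<inter> y)) else 0)"
  have "F \<in> flows C B X"
    unfolding flows_def
  proof (intro CollectI conjI ballI impI)
    fix y c assume "y \<in> Pow C" "c \<in> X" show "0 \<le> F y c" by (simp add: F_def)
  next
    fix y c assume "y \<in> Pow C" "c \<in> X" "c \<notin> y" then show "F y c = 0" by (simp add: F_def)
  next
    fix y assume "y \<in> Pow C" "y \<inter> X \<noteq> {}"
    then have ne: "card (X \<inter> y) \<noteq> 0" using assms by auto
    have "(\<Sum>c\<in>X \<inter> y. F y c) = (\<Sum>c\<in>X \<inter> y. real (B y) / real (card (X \<inter> y)))"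
      by (rule sum.cong) (auto simp: F_def)
    also have "\<dots> = real (B y)" using ne by simp
    finally show "(\<Sum>c\<in>X \<inter> y. F y c) = real (B y)" .
  qed
  then show ?thesis by blast
qed

lemma flows_le:
  assumes "F \<in> flows C B X" "finite X" "c \<in> X" "y \<in> Pow C"
  shows "F y c \<le> real (B y)"
proof (cases "c \<in> y")
  case True
  then have "y \<inter> X \<noteq> {}" using assms by auto
  then have eq: "(\<Sum>c\<in>X \<inter> y. F y c) = real (B y)" using assms unfolding flows_def by auto
  have "F y c \<le> (\<Sum>c\<in>X \<inter> y. F y c)"
    by (rule member_le_sum) (use assms True in \<open>auto simp: flows_def\<close>)
  then show ?thesis using eq by simp
next
  case False
  then show ?thesis using assms unfolding flows_def by auto
qed

lemma supp_le:
  assumes "F \<in> flows C B X" "finite X" "c \<in> X"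
  shows "supp C F c \<le> (\<Sum>y\<in>Pow C. real (B y))"
  unfolding supp_def by (rule sum_mono) (rule flows_le[OF assms])

lemma maxMin_mono_gen:
  assumes X: "finite X" "X \<noteq> {}"
    and tr: "\<And>F. F \<in> flows C B X \<Longrightarrow> \<exists>F'\<in>flows C B' X. \<forall>c\<in>X. supp C F c \<le> supp C F' c"
  shows "maxMin C B X \<le> maxMin C B' X"
  unfolding maxMin_def
proof (rule cSup_mono)
  show "(\<lambda>F. Min (supp C F ` X)) ` flows C B X \<noteq> {}" using flows_nonempty[OF X(1)] by blast
next
  obtain c0 where c0: "c0 \<in> X" using X by blast
  show "bdd_above ((\<lambda>F. Min (supp C F ` X)) ` flows C B' X)"
  proof (rule bdd_aboveI2)
    fix F assume F: "F \<in> flows C B' X"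
    have "Min (supp C F ` X) \<le> supp C F c0" using X c0 by (intro Min_le) auto
    also have "\<dots> \<le> (\<Sum>y\<in>Pow C. real (B' y))" by (rule supp_le[OF F X(1) c0])
    finally show "Min (supp C F ` X) \<le> (\<Sum>y\<in>Pow C. real (B' y))" .
  qed
next
  fix m assume "m \<in> (\<lambda>F. Min (supp C F ` X)) ` flows C B X"
  then obtain F where F: "F \<in> flows C B X" and m: "m = Min (supp C F ` X)" by blast
  obtain F' where F': "F' \<in> flows C B' X" and le: "\<forall>c\<in>X. supp C F c \<le> supp C F' c"
    using tr[OF F] by blast
  obtain c1 where c1: "c1 \<in> X" "Min (supp C F' ` X) = supp C F' c1"
    using X by (metis (no_types, lifting) Min_in finite_imageI image_iff image_is_empty)
  have "m \<le> supp C F c1" unfolding m using X c1 by (intro Min_le) auto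
  also have "\<dots> \<le> Min (supp C F' ` X)" using le c1 by simp
  finally show "\<exists>m'\<in>(\<lambda>F. Min (supp C F ` X)) ` flows C B' X. m \<le> m'" using F' by blast
qed



lemma add_flow:
  assumes X: "finite X" and y2: "y2 \<in> Pow C" and C: "finite C" and F: "F \<in> flows C B X"
  shows "\<exists>F'\<in>flows C (B(y2 := B y2 + 1)) X. \<forall>c\<in>X. supp C F c \<le> supp C F' c"
proof -
  define w where "w = (\<lambda>c. if c \<in> y2 then 1 / real (card (X \<inter> y2)) else (0::real))"
  define F' where "F' = (\<lambda>y c. F y c + (if y = y2 then w c else 0))"
  have w0: "w c \<ge> 0" for c by (simp add: w_def)
  have "F' \<in> flows C (B(y2 := B y2 + 1)) X"
    unfolding flows_def
  proof (intro CollectI conjI ballI impI)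
    fix y c assume "y \<in> Pow C" "c \<in> X" then show "0 \<le> F' y c"
      using F w0 unfolding flows_def F'_def by (auto simp: add_nonneg_nonneg)
  next
    fix y c assume "y \<in> Pow C" "c \<in> X" "c \<notin> y" then show "F' y c = 0"
      using F unfolding flows_def F'_def w_def by auto
  next
    fix y assume y: "y \<in> Pow C" "y \<inter> X \<noteq> {}"
    show "(\<Sum>c\<in>X \<inter> y. F' y c) = real ((B(y2 := B y2 + 1)) y)"
    proof (cases "y = y2")
      case True
      then have ne: "card (X \<inter> y2) \<noteq> 0" using X y by auto
      have "(\<Sum>c\<in>X \<inter> y. F' y c) = (\<Sum>c\<in>X \<inter> y. F y c) + (\<Sum>c\<in>X \<inter> y2. 1 / real (card (X \<inter> y2)))"
        unfolding F'_def using True by (simp add: sum.distrib w_def)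
      also have "\<dots> = real (B y) + 1" using F y ne unfolding flows_def by auto
      finally show ?thesis using True by simp
    next
      case False
      then show ?thesis using F y unfolding flows_def F'_def by auto
    qed
  qed
  moreover have "\<forall>c\<in>X. supp C F c \<le> supp C F' c"
    unfolding supp_def F'_def using w0 by (auto intro!: sum_mono)
  ultimately show ?thesis by blast
qed

lemma move_flow:
  assumes X: "finite X" and y1: "y1 \<in> Pow C" and y2: "y2 \<in> Pow C" and C: "finite C"
    and ne: "y1 \<noteq> y2" and b1: "B y1 \<ge> 1" and sub: "X \<inter> y1 \<subseteq> X \<inter> y2"
    and F: "F \<in> flows C B X"
  shows "\<exists>F'\<in>flows C (B(y1 := B y1 - 1, y2 := B y2 + 1)) X. \<forall>c\<in>X. supp C F c \<le> supp C F' c"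
proof -
  define b where "b = real (B y1)"
  have bpos: "b \<ge> 1" using b1 by (simp add: b_def)
  define v where "v = (\<lambda>c. F y1 c / b)"
  define w where "w = (\<lambda>c. if X \<inter> y1 \<noteq> {} then v c else if c \<in> y2 then 1 / real (card (X \<inter> y2)) else (0::real))"
  define F' where "F' = (\<lambda>y c. F y c + (if y = y2 then w c else 0) - (if y = y1 then v c else 0))"
  let ?B' = "B(y1 := B y1 - 1, y2 := B y2 + 1)"
  have Fnn: "c \<in> X \<Longrightarrow> y \<in> Pow C \<Longrightarrow> F y c \<ge> 0" for y c using F unfolding flows_def by auto
  have Fz: "c \<in> X \<Longrightarrow> y \<in> Pow C \<Longrightarrow> c \<notin> y \<Longrightarrow> F y c = 0" for y c using F unfolding flows_def by auto
  have Fs: "y \<in> Pow C \<Longrightarrow> y \<inter> X \<noteq> {} \<Longrightarrow> (\<Sum>c\<in>X \<inter> y. F y c) = real (B y)" for y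
    using F unfolding flows_def by auto
  have v0: "c \<in> X \<Longrightarrow> v c \<ge> 0" for c using Fnn[OF _ y1] bpos by (simp add: v_def)
  have w0: "c \<in> X \<Longrightarrow> w c \<ge> 0" for c using v0 by (simp add: w_def)
  have vle: "c \<in> X \<Longrightarrow> v c \<le> F y1 c" for c using Fnn[OF _ y1] bpos
    unfolding v_def using divide_left_mono[of 1 b "F y1 c"] by simp
  have wv: "c \<in> X \<Longrightarrow> v c \<le> w c" for c
  proof -
    assume c: "c \<in> X"
    show "v c \<le> w c"
    proof (cases "X \<inter> y1 \<noteq> {}")
      case True then show ?thesis by (simp add: w_def)
    next
      case False
      then have "c \<notin> y1" using c by auto
      then have "v c = 0" using Fz[OF c y1] by (simp add: v_def)
      then show ?thesis using w0[OF c] by simp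
    qed
  qed
  have "F' \<in> flows C ?B' X"
    unfolding flows_def
  proof (intro CollectI conjI ballI impI)
    fix y c assume yc: "y \<in> Pow C" "c \<in> X" then show "0 \<le> F' y c"
      using Fnn[OF yc(2) yc(1)] w0[OF yc(2)] vle[OF yc(2)] ne unfolding F'_def by auto
  next
    fix y c assume yc: "y \<in> Pow C" "c \<in> X" "c \<notin> y" then show "F' y c = 0"
      using Fz[OF yc(2) yc(1) yc(3)] Fz[OF yc(2) y1] sub unfolding F'_def w_def v_def by auto
  next
    fix y assume y: "y \<in> Pow C" "y \<inter> X \<noteq> {}"
    show "(\<Sum>c\<in>X \<inter> y. F' y c) = real (?B' y)"
    proof (cases "y = y2")
      case True
      have "(\<Sum>c\<in>X \<inter> y. F' y c) = (\<Sum>c\<in>X \<inter> y2. F y2 c) + (\<Sum>c\<in>X \<inter> y2. w c)"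
        unfolding F'_def using True ne by (simp add: sum.distrib)
      also have "(\<Sum>c\<in>X \<inter> y2. w c) = 1"
      proof (cases "X \<inter> y1 \<noteq> {}")
        case True
        have "(\<Sum>c\<in>X \<inter> y2. w c) = (\<Sum>c\<in>X \<inter> y2. F y1 c / b)" by (simp add: w_def v_def True)
        also have "\<dots> = (\<Sum>c\<in>X \<inter> y1. F y1 c / b)"
          by (rule sum.mono_neutral_right) (use X sub Fz[OF _ y1] in auto)
        also have "\<dots> = (\<Sum>c\<in>X \<inter> y1. F y1 c) / b" by (simp add: sum_divide_distrib)
        also have "\<dots> = 1" using Fs[OF y1] True bpos by (auto simp: b_def Int_commute)
        finally show ?thesis .
      next
        case False
        have ne2: "card (X \<inter> y2) \<noteq> 0" using X y True by auto
        have "(\<Sum>c\<in>X \<inter> y2. w c) = (\<Sum>c\<in>X \<inter> y2. 1 / real (card (X \<inter> y2)))"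
          by (rule sum.cong) (use False in \<open>auto simp: w_def\<close>)
        then show ?thesis using ne2 by simp
      qed
      also have "(\<Sum>c\<in>X \<inter> y2. F y2 c) = real (B y2)" using Fs[OF y2] y True by auto
      finally show ?thesis using True by simp
    next
      case n2: False
      show ?thesis
      proof (cases "y = y1")
        case True
        have "(\<Sum>c\<in>X \<inter> y. F' y c) = (\<Sum>c\<in>X \<inter> y1. F y1 c - F y1 c / b)"
          unfolding F'_def v_def using True ne by simp
        also have "\<dots> = (\<Sum>c\<in>X \<inter> y1. F y1 c) - (\<Sum>c\<in>X \<inter> y1. F y1 c) / b"
          by (simp add: sum_subtractf sum_divide_distrib)
        also have "\<dots> = b - 1" using Fs[OF y1] y True bpos by (simp add: b_def)
        also have "\<dots> = real (?B' y)" using True ne b1 by (simp add: b_def of_nat_diff)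
        finally show ?thesis .
      next
        case False
        then show ?thesis using n2 Fs[OF y] y unfolding F'_def by simp
      qed
    qed
  qed
  moreover have "\<forall>c\<in>X. supp C F c \<le> supp C F' c"
  proof
    fix c assume c: "c \<in> X"
    have "supp C F' c = supp C F c + w c - v c"
      unfolding supp_def F'_def using C y1 y2
      by (simp add: sum.distrib sum_subtractf)
    then show "supp C F c \<le> supp C F' c" using wv[OF c] by simp
  qed
  ultimately show ?thesis by blast
qed



lemma hd_filter_sub:
  assumes "\<And>x. P x \<Longrightarrow> Q x" "P (hd (filter Q xs))"
  shows "hd (filter P xs) = hd (filter Q xs)"
  using assms(2)
proof (induction xs)
  case Nil then show ?case by simp
next
  case (Cons x xs)
  show ?case
  proof (cases "Q x")
    case True then show ?thesis using Cons.prems by simp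
  next
    case False
    then have "\<not> P x" using assms(1) by blast
    then show ?thesis using False Cons by simp
  qed
qed

lemma odh_next_step:
  assumes prio: "set prio = C" and fin: "finite C"
    and le: "\<forall>c\<in>C - Ce. maxMin C B (Ce \<union> {c}) \<le> maxMin C B' (Ce \<union> {c})"
    and eq: "\<forall>c\<in>C - Ce - G. maxMin C B (Ce \<union> {c}) = maxMin C B' (Ce \<union> {c})"
  shows "odh_next prio C B' Ce \<in> G \<or> odh_next prio C B Ce = odh_next prio C B' Ce"
proof -
  define R where "R = C - Ce"
  define f where "f = (\<lambda>c. maxMin C B (Ce \<union> {c}))"
  define f' where "f' = (\<lambda>c. maxMin C B' (Ce \<union> {c}))"
  define m where "m = Max (f ` R)"
  define m' where "m' = Max (f' ` R)"
  define P where "P = (\<lambda>c. c \<in> R \<and> f c = m)"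
  define Q where "Q = (\<lambda>c. c \<in> R \<and> f' c = m')"
  have w: "odh_next prio C B Ce = hd (filter P prio)"
    unfolding odh_next_def Let_def P_def R_def m_def f_def by simp
  have w': "odh_next prio C B' Ce = hd (filter Q prio)"
    unfolding odh_next_def Let_def Q_def R_def m'_def f'_def by simp
  have finR: "finite R" using fin by (simp add: R_def)
  show ?thesis
  proof (cases "R = {}")
    case True
    then have "filter P prio = []" "filter Q prio = []" by (auto simp: P_def Q_def filter_empty_conv)
    then show ?thesis using w w' by simp
  next
    case Rne: False
    have "m' \<in> f' ` R" unfolding m'_def using finR Rne by (intro Max_in) auto
    then obtain x where x: "x \<in> R" "f' x = m'" by auto
    have "x \<in> set prio" using x prio by (auto simp: R_def)
    then have "filter Q prio \<noteq> []" using x by (auto simp: Q_def filter_empty_conv)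
    then have "hd (filter Q prio) \<in> set (filter Q prio)" by (rule hd_in_set)
    then have Qw: "Q (hd (filter Q prio))" by (simp only: set_filter) blast
    show ?thesis
    proof (cases "hd (filter Q prio) \<in> G")
      case True then show ?thesis using w' by simp
    next
      case False
      let ?w = "hd (filter Q prio)"
      have wR: "?w \<in> R" "f' ?w = m'" using Qw by (auto simp: Q_def)
      then have fw: "f ?w = m'" using eq False by (auto simp: f_def f'_def R_def)
      have "m \<in> f ` R" unfolding m_def using finR Rne by (intro Max_in) auto
      then obtain y where y: "y \<in> R" "f y = m" by auto
      have "f' y \<le> m'" unfolding m'_def using finR y by (intro Max_ge) auto
      moreover have "f y \<le> f' y" using le y by (auto simp: f_def f'_def R_def)
      moreover have "f ?w \<le> m" unfolding m_def using finR wR by (intro Max_ge) auto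
      ultimately have mm: "m = m'" using fw y by linarith
      have PQ: "P c \<Longrightarrow> Q c" for c
      proof -
        assume "P c"
        then have c: "c \<in> R" "f c = m" by (auto simp: P_def)
        have "f' c \<le> m'" unfolding m'_def using finR c by (intro Max_ge) auto
        moreover have "f c \<le> f' c" using le c by (auto simp: f_def f'_def R_def)
        ultimately show "Q c" using c mm by (auto simp: Q_def)
      qed
      have "P ?w" using wR fw mm by (simp add: P_def)
      from hd_filter_sub[of P Q prio, OF PQ this] show ?thesis using w w' by simp
    qed
  qed
qed

lemma odh_iter_finite: "finite (odh_iter prio C B k)"
  by (induction k) (auto simp: Let_def)

lemma odh_iter_mono: "odh_iter prio C B k \<subseteq> odh_iter prio C B (Suc k)"
  by (auto simp: Let_def)

lemma odh_compare:
  assumes prio: "set prio = C" and fin: "finite C"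
    and H1: "\<And>X. finite X \<Longrightarrow> X \<noteq> {} \<Longrightarrow> maxMin C B X \<le> maxMin C B' X"
    and H2: "\<And>X. finite X \<Longrightarrow> X \<noteq> {} \<Longrightarrow> X \<inter> G = {} \<Longrightarrow> maxMin C B X = maxMin C B' X"
  shows "(odh_iter prio C B k = odh_iter prio C B' k \<and> G \<inter> odh_iter prio C B k = {})
         \<or> G \<inter> odh_iter prio C B' k \<noteq> {}"
proof (induction k)
  case 0 then show ?case by simp
next
  case (Suc k)
  show ?case
  proof (cases "G \<inter> odh_iter prio C B' k \<noteq> {}")
    case True
    then show ?thesis using odh_iter_mono[of prio C B' k] by blast
  next
    case False
    then have same: "odh_iter prio C B k = odh_iter prio C B' k" and dis: "G \<inter> odh_iter prio C B k = {}"
      using Suc by auto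
    define Ce where "Ce = odh_iter prio C B k"
    have finCe: "finite Ce" unfolding Ce_def by (rule odh_iter_finite)
    have le: "\<forall>c\<in>C - Ce. maxMin C B (Ce \<union> {c}) \<le> maxMin C B' (Ce \<union> {c})"
      using finCe H1 by auto
    have eq: "\<forall>c\<in>C - Ce - G. maxMin C B (Ce \<union> {c}) = maxMin C B' (Ce \<union> {c})"
      using finCe H2 dis unfolding Ce_def by auto
    have st: "odh_next prio C B' Ce \<in> G \<or> odh_next prio C B Ce = odh_next prio C B' Ce"
      by (rule odh_next_step[OF prio fin le eq])
    have I: "odh_iter prio C B (Suc k) = Ce \<union> {odh_next prio C B Ce}"
      by (simp add: Ce_def Let_def)
    have I': "odh_iter prio C B' (Suc k) = Ce \<union> {odh_next prio C B' Ce}"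
      by (simp add: Ce_def same Let_def)
    show ?thesis using st I I' dis Ce_def by auto
  qed
qed



theorem theorem6:
  fixes prio :: "'c list" and C :: "'c set" and S nV :: nat and B :: "'c set \<Rightarrow> nat"
    and G :: "'c set"
  assumes prio: "distinct prio" "set prio = C"
    and el: "valid_election nV C S B"
    and G: "G \<noteq> {}" "G \<subseteq> ODH prio C S B"
  shows
    "(\<forall>A B1. A \<subseteq> C \<and> G \<inter> A = {} \<and> B A \<ge> 1 \<and>
        B1 = B(A := B A - 1, A \<union> G := B (A \<union> G) + 1) \<and> valid_election nV C S B1
        \<longrightarrow> G \<inter> ODH prio C S B1 \<noteq> {})
   \<and> (\<forall>B2. B2 = B(G := B G + 1) \<and> valid_election (nV + 1) C S B2
        \<longrightarrow> G \<inter> ODH prio C S B2 \<noteq> {})"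
proof -
  have fin: "finite C" using el by (simp add: valid_election_def)
  have GB: "G \<inter> odh_iter prio C B S \<noteq> {}" using G by (auto simp: ODH_def)
  have final: "G \<inter> ODH prio C S B' \<noteq> {}"
    if H1: "\<And>X. finite X \<Longrightarrow> X \<noteq> {} \<Longrightarrow> maxMin C B X \<le> maxMin C B' X"
    and H2: "\<And>X. finite X \<Longrightarrow> X \<noteq> {} \<Longrightarrow> X \<inter> G = {} \<Longrightarrow> maxMin C B X = maxMin C B' X"
    for B'
    using odh_compare[OF prio(2) fin H1 H2, where k = S] GB by (auto simp: ODH_def)
  show ?thesis
  proof (intro conjI allI impI)
    fix A B1
    assume a: "A \<subseteq> C \<and> G \<inter> A = {} \<and> B A \<ge> 1 \<and>
        B1 = B(A := B A - 1, A \<union> G := B (A \<union> G) + 1) \<and> valid_election nV C S B1"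
    then have A: "A \<subseteq> C" "G \<inter> A = {}" "B A \<ge> 1" and B1: "B1 = B(A := B A - 1, A \<union> G := B (A \<union> G) + 1)"
      and v1: "valid_election nV C S B1" by auto
    have neq: "A \<noteq> A \<union> G" using A(2) G(1) by blast
    have "B1 (A \<union> G) \<noteq> 0" using B1 by simp
    moreover have "\<forall>y. \<not> y \<subseteq> C \<longrightarrow> B1 y = 0" using v1 by (simp add: valid_election_def)
    ultimately have AG: "A \<union> G \<subseteq> C" by metis
    have restore: "B1(A \<union> G := B1 (A \<union> G) - 1, A := B1 A + 1) = B"
    proof (rule ext)
      fix y show "(B1(A \<union> G := B1 (A \<union> G) - 1, A := B1 A + 1)) y = B y"
        unfolding B1 using neq A(3) by (cases "y = A"; cases "y = A \<union> G") simp_all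
    qed
    have PA: "A \<in> Pow C" and PAG: "A \<union> G \<in> Pow C" using A AG by auto
    have sub1: "X \<inter> A \<subseteq> X \<inter> (A \<union> G)" for X :: "'c set" by blast
    have b1': "B1 (A \<union> G) \<ge> 1" using B1 by simp
    show "G \<inter> ODH prio C S B1 \<noteq> {}"
    proof (rule final)
      fix X :: "'c set" assume X: "finite X" "X \<noteq> {}"
      show "maxMin C B X \<le> maxMin C B1 X"
        unfolding B1
        by (rule maxMin_mono_gen[OF X]) (rule move_flow[where B=B, OF X(1) PA PAG fin neq A(3) sub1[of X]])
    next
      fix X :: "'c set" assume X: "finite X" "X \<noteq> {}" "X \<inter> G = {}"
      have "maxMin C B1 X \<le> maxMin C B X"
      proof (rule maxMin_mono_gen[OF X(1,2)])
        fix F assume F: "F \<in> flows C B1 X"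
        have sub2: "X \<inter> (A \<union> G) \<subseteq> X \<inter> A" using X(3) by blast
        have "\<exists>F'\<in>flows C (B1(A \<union> G := B1 (A \<union> G) - 1, A := B1 A + 1)) X. \<forall>c\<in>X. supp C F c \<le> supp C F' c"
          by (rule move_flow[where B=B1, OF X(1) PAG PA fin neq[symmetric] b1' sub2 F])
        then show "\<exists>F'\<in>flows C B X. \<forall>c\<in>X. supp C F c \<le> supp C F' c" unfolding restore .
      qed
      moreover have "maxMin C B X \<le> maxMin C B1 X"
        unfolding B1
        by (rule maxMin_mono_gen[OF X(1,2)]) (rule move_flow[where B=B, OF X(1) PA PAG fin neq A(3) sub1[of X]])
      ultimately show "maxMin C B X = maxMin C B1 X" by simp
    qed
  next
    fix B2
    assume a: "B2 = B(G := B G + 1) \<and> valid_election (nV + 1) C S B2"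
    then have B2: "B2 = B(G := B G + 1)" and v2: "valid_election (nV + 1) C S B2" by auto
    have "B2 G \<noteq> 0" using B2 by simp
    moreover have "\<forall>y. \<not> y \<subseteq> C \<longrightarrow> B2 y = 0" using v2 by (simp add: valid_election_def)
    ultimately have GC: "G \<subseteq> C" by metis
    show "G \<inter> ODH prio C S B2 \<noteq> {}"
    proof (rule final)
      fix X :: "'c set" assume X: "finite X" "X \<noteq> {}"
      show "maxMin C B X \<le> maxMin C B2 X"
        unfolding B2
        by (rule maxMin_mono_gen[OF X]) (rule add_flow[OF X(1) _ fin], use GC in blast)
    next
      fix X :: "'c set" assume X: "finite X" "X \<noteq> {}" "X \<inter> G = {}"
      have bb: "\<And>y. y \<inter> X \<noteq> {} \<Longrightarrow> B2 y = B y" unfolding B2 using X(3) by auto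
      have "flows C B X = flows C B2 X"
        unfolding flows_def by (rule Collect_cong) (simp add: bb cong: conj_cong)
      then show "maxMin C B X = maxMin C B2 X" unfolding maxMin_def by simp
    qed
  qed
qed

end
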